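(* Consider the one-time data acquisition setting with $\Theta\subseteq\mathbb{R}^m$ in which the analyst uses an exponential family model with conjugate prior, as described in the context, and Mechanism 1 run with budget $B$ and constants $L<R$ bounding $\log PMI$. Then Mechanism 1 is sensitive if and only if for every provider $i$ and any parameters $(\nu_i',\bar\tau_i')\ne(\nu_i,\bar\tau_i)$ we have $\Pr_{D_{-i}}\left[h_{D_{-i}}(\nu_i',\bar\tau_i')\ne h_{D_{-i}}(\nu_i,\bar\tau_i)\right]>0$.
   Context: There are $n$ data providers; provider $i$ holds dataset $D_i$ whose points are i.i.d. conditioned on an unknown $\theta\in\Theta\subseteq\mathbb{R}^m$; datasets are independent conditioned on $\theta$; $D_{-i}$ denotes the datasets of all providers except $i$. The likelihood is in an exponential family $p(x\mid\theta)=h(x)\exp[\theta^T\phi(x)-A(\theta)]$ and the analyst uses the conjugate family $\mathcal{P}(\theta\mid\nu,\bar\tau)=g(\nu,\bar\tau)\exp[\nu\theta^T\bar\tau-\nu A(\theta)]$, so that $p(\theta)=\mathcal{P}(\theta\mid\nu_0,\bar\tau_0)$, $p(\theta\mid D_i)=\mathcal{P}(\theta\mid\nu_i,\bar\tau_i)$ and $p(\theta\mid D_{-i})=\mathcal{P}(\theta\mid\nu_{-i},\bar\tau_{-i})$. Define $h_{D_{-i}}(\nu_i,\bar\tau_i)=\dfrac{g(\nu_i,\bar\tau_i)}{g\left(\nu_i+\nu_{-i}-\nu_0,\ \frac{\nu_i\bar\tau_i+\nu_{-i}\bar\tau_{-i}-\nu_0\bar\tau_0}{\nu_i+\nu_{-i}-\nu_0}\right)}$.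 Define $PMI(D_i,D_{-i})=\int_\Theta\frac{p(\theta\mid D_i)p(\theta\mid D_{-i})}{p(\theta)}d\theta$ and $\mathbb{D}_i(D_{-i})=\{D_i:PMI(D_i,D_{-i})>0\}$. Mechanism 1 (with budget $B$ and constants $L<R$ such that $L\le\log PMI(D_i,D_{-i})\le R$ whenever $PMI>0$): providers report $\tilde D_1,\dots,\tilde D_n$; provider $i$ is paid $\frac{B}{n}\cdot\frac{\log PMI(\tilde D_i,\tilde D_{-i})-L}{R-L}$ if $\tilde D_i\in\mathbb{D}_i(\tilde D_{-i})$ and $0$ otherwise. A payment rule $r$ is sensitive if for every provider $i$ and every realization $D_i$, whenever every other provider $j\ne i$ reports a dataset $\tilde D_j(D_j)$ with $p(\theta\mid\tilde D_j(D_j))=p(\theta\mid D_j)$, we have (1) reporting $D_i$ maximizes $\mathbb{E}_{D_{-i}\sim p(D_{-i}\mid D_i)}[r_i(\cdot,\tilde D_{-i}(D_{-i}))]$ over all reports, and (2) reporting any $D_i'$ with $p(\theta\mid D_i')\ne p(\theta\mid D_i)$ gives strictly smaller expected payment than reporting any $\tilde D_i$ with $p(\theta\mid\tilde D_i)=p(\theta\mid D_i)$. *)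

theory Defs
  imports "HOL-Probability.Probability"
begin

text \<open>Data points live in the measurable space Xsp (with base
measure Xsp for the likelihood density), the parameter theta ranges over
Theta, a subset of R^m (type real^m), integrals over Theta are w.r.t. Lebesgue measure.
Provider j (j < nprov) holds a dataset of Nsz j points.\<close>

record ('x, 'm::finite) emodel =
  Xsp   :: "'x measure"
  hb    :: "'x \<Rightarrow> real"
  phi   :: "'x \<Rightarrow> real^'m"
  Apart :: "real^'m \<Rightarrow> real"
  Theta :: "(real^'m) set"
  nu0   :: real
  tau0  :: "real^'m"
  nprov :: nat
  Nsz   :: "nat \<Rightarrow> nat"

definition lik :: "('x,'m::finite) emodel \<Rightarrow> real^'m \<Rightarrow> 'x \<Rightarrow> real" where
  "lik M \<theta> x = hb M x * exp (\<theta> \<bullet> phi M x - Apart M \<theta>)"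

definition conj_kernel :: "('x,'m::finite) emodel \<Rightarrow> real \<Rightarrow> real^'m \<Rightarrow> real^'m \<Rightarrow> real" where
  "conj_kernel M \<nu> \<tau> \<theta> = exp (\<nu> * (\<theta> \<bullet> \<tau>) - \<nu> * Apart M \<theta>)"

definition gnorm :: "('x,'m::finite) emodel \<Rightarrow> real \<Rightarrow> real^'m \<Rightarrow> real" where
  "gnorm M \<nu> \<tau> = 1 / (LINT \<theta>:Theta M|lborel. conj_kernel M \<nu> \<tau> \<theta>)"

definition conj :: "('x,'m::finite) emodel \<Rightarrow> real \<Rightarrow> real^'m \<Rightarrow> real^'m \<Rightarrow> real" where
  "conj M \<nu> \<tau> \<theta> = gnorm M \<nu> \<tau> * conj_kernel M \<nu> \<tau> \<theta>"

text \<open>Posterior parameters (nu_D, tau_D) of a dataset D (standard conjugate update),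
so that p(theta | D) = P(theta | nu_D, tau_D); the empty dataset gives the prior.\<close>
definition nu_of :: "('x,'m::finite) emodel \<Rightarrow> 'x list \<Rightarrow> real" where
  "nu_of M xs = nu0 M + real (length xs)"

definition tau_of :: "('x,'m::finite) emodel \<Rightarrow> 'x list \<Rightarrow> real^'m" where
  "tau_of M xs = (1 / nu_of M xs) *\<^sub>R (nu0 M *\<^sub>R tau0 M + sum_list (map (phi M) xs))"

definition params :: "('x,'m::finite) emodel \<Rightarrow> 'x list \<Rightarrow> real \<times> (real^'m)" where
  "params M xs = (nu_of M xs, tau_of M xs)"

definition post :: "('x,'m::finite) emodel \<Rightarrow> 'x list \<Rightarrow> real^'m \<Rightarrow> real" where
  "post M xs = conj M (nu_of M xs) (tau_of M xs)"

definition prior :: "('x,'m::finite) emodel \<Rightarrow> real^'m \<Rightarrow> real" where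
  "prior M = conj M (nu0 M) (tau0 M)"

text \<open>Pointwise mutual information PMI(D_i, D_{-i}); the datasets of the other providers
enter only through their union (the concatenation), whose posterior is p(theta | D_{-i}).\<close>
definition PMI :: "('x,'m::finite) emodel \<Rightarrow> 'x list \<Rightarrow> 'x list \<Rightarrow> real" where
  "PMI M xs ys = (LINT \<theta>:Theta M|lborel. post M xs \<theta> * post M ys \<theta> / prior M \<theta>)"

definition hfun :: "('x,'m::finite) emodel \<Rightarrow> 'x list \<Rightarrow> real \<times> (real^'m) \<Rightarrow> real" where
  "hfun M ys p =
     (let \<nu> = fst p; \<tau> = snd p; \<nu>m = nu_of M ys; \<tau>m = tau_of M ys;
          \<nu>c = \<nu> + \<nu>m - nu0 M
      in gnorm M \<nu> \<tau> /
         gnorm M \<nu>c ((1 / \<nu>c) *\<^sub>R (\<nu> *\<^sub>R \<tau> + \<nu>m *\<^sub>R \<tau>m - nu0 M *\<^sub>R tau0 M)))"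

definition datasets :: "('x,'m::finite) emodel \<Rightarrow> nat \<Rightarrow> 'x list set" where
  "datasets M j = {xs. length xs = Nsz M j \<and> set xs \<subseteq> space (Xsp M)}"

definition others :: "('x,'m::finite) emodel \<Rightarrow> nat \<Rightarrow> nat list" where
  "others M i = filter (\<lambda>j. j \<noteq> i) [0..<nprov M]"

definition minus_i :: "('x,'m::finite) emodel \<Rightarrow> nat \<Rightarrow> (nat \<Rightarrow> 'x list) \<Rightarrow> 'x list" where
  "minus_i M i rep = concat (map rep (others M i))"

definition payment :: "('x,'m::finite) emodel \<Rightarrow> real \<Rightarrow> real \<Rightarrow> real \<Rightarrow> nat \<Rightarrow> (nat \<Rightarrow> 'x list) \<Rightarrow> real" where
  "payment M B L R i rep =
     (let P = PMI M (rep i) (minus_i M i rep)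
      in if P > 0 then B / real (nprov M) * ((ln P - L) / (R - L)) else 0)"

text \<open>Random datasets of the other providers: Dm j k is the k-th point of provider j.\<close>
definition Pm :: "('x,'m::finite) emodel \<Rightarrow> nat \<Rightarrow> (nat \<Rightarrow> nat \<Rightarrow> 'x) measure" where
  "Pm M i = PiM ({..<nprov M} - {i}) (\<lambda>j. PiM {..<Nsz M j} (\<lambda>_. Xsp M))"

definition data_list :: "('x,'m::finite) emodel \<Rightarrow> (nat \<Rightarrow> nat \<Rightarrow> 'x) \<Rightarrow> nat \<Rightarrow> 'x list" where
  "data_list M Dm j = map (Dm j) [0..<Nsz M j]"

definition data_minus :: "('x,'m::finite) emodel \<Rightarrow> nat \<Rightarrow> (nat \<Rightarrow> nat \<Rightarrow> 'x) \<Rightarrow> 'x list" where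
  "data_minus M i Dm = concat (map (data_list M Dm) (others M i))"

definition lik_minus :: "('x,'m::finite) emodel \<Rightarrow> nat \<Rightarrow> real^'m \<Rightarrow> (nat \<Rightarrow> nat \<Rightarrow> 'x) \<Rightarrow> real" where
  "lik_minus M i \<theta> Dm = (\<Prod>j\<in>{..<nprov M} - {i}. \<Prod>k<Nsz M j. lik M \<theta> (Dm j k))"

text \<open>Density of p(D_{-i} | D_i) and of the marginal p(D_{-i}) w.r.t. Pm M i.\<close>
definition cond_dens :: "('x,'m::finite) emodel \<Rightarrow> nat \<Rightarrow> 'x list \<Rightarrow> (nat \<Rightarrow> nat \<Rightarrow> 'x) \<Rightarrow> real" where
  "cond_dens M i Di Dm = (LINT \<theta>:Theta M|lborel. post M Di \<theta> * lik_minus M i \<theta> Dm)"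

definition marg_dens :: "('x,'m::finite) emodel \<Rightarrow> nat \<Rightarrow> (nat \<Rightarrow> nat \<Rightarrow> 'x) \<Rightarrow> real" where
  "marg_dens M i Dm = (LINT \<theta>:Theta M|lborel. prior M \<theta> * lik_minus M i \<theta> Dm)"

definition exp_pay ::
  "('x,'m::finite) emodel \<Rightarrow> real \<Rightarrow> real \<Rightarrow> real \<Rightarrow> nat \<Rightarrow> 'x list \<Rightarrow> (nat \<Rightarrow> 'x list \<Rightarrow> 'x list) \<Rightarrow> 'x list \<Rightarrow> real" where
  "exp_pay M B L R i Di f rep_i =
     (LINT Dm|Pm M i. cond_dens M i Di Dm *
        payment M B L R i (\<lambda>j. if j = i then rep_i else f j (data_list M Dm j)))"

text \<open>Sensitivity of Mechanism 1. Posteriors are identified with their conjugate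
parameters (nu, tau).\<close>
definition sensitive :: "('x,'m::finite) emodel \<Rightarrow> real \<Rightarrow> real \<Rightarrow> real \<Rightarrow> bool" where
  "sensitive M B L R \<longleftrightarrow>
    (\<forall>i<nprov M. \<forall>Di\<in>datasets M i. \<forall>f.
      (\<forall>j<nprov M. j \<noteq> i \<longrightarrow> (\<forall>D\<in>datasets M j. f j D \<in> datasets M j \<and> params M (f j D) = params M D))
      \<longrightarrow>
      (\<forall>D'\<in>datasets M i. exp_pay M B L R i Di f D' \<le> exp_pay M B L R i Di f Di) \<and>
      (\<forall>D'\<in>datasets M i. \<forall>Dt\<in>datasets M i.
          params M D' \<noteq> params M Di \<and> params M Dt = params M Di
          \<longrightarrow> exp_pay M B L R i Di f D' < exp_pay M B L R i Di f Dt))"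

definition valid_model :: "('x,'m::finite) emodel \<Rightarrow> bool" where
  "valid_model M \<longleftrightarrow>
     sigma_finite_measure (Xsp M) \<and>
     Theta M \<in> sets lborel \<and> nu0 M > 0 \<and>
     hb M \<in> borel_measurable (Xsp M) \<and> phi M \<in> borel_measurable (Xsp M) \<and>
     Apart M \<in> borel_measurable lborel \<and>
     (\<forall>x\<in>space (Xsp M). hb M x \<ge> 0) \<and>
     (\<forall>\<theta>\<in>Theta M. integrable (Xsp M) (lik M \<theta>) \<and> (\<integral>x. lik M \<theta> x \<partial>Xsp M) = 1) \<and>
     (\<forall>xs\<in>lists (space (Xsp M)).
        set_integrable lborel (Theta M) (conj_kernel M (nu_of M xs) (tau_of M xs)) \<and>
        (LINT \<theta>:Theta M|lborel. conj_kernel M (nu_of M xs) (tau_of M xs) \<theta>) > 0)"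

definition mech_ok :: "('x,'m::finite) emodel \<Rightarrow> real \<Rightarrow> real \<Rightarrow> real \<Rightarrow> bool" where
  "mech_ok M B L R \<longleftrightarrow> B > 0 \<and> L < R \<and>
     (\<forall>i<nprov M. \<forall>rep. (\<forall>j<nprov M. rep j \<in> datasets M j) \<longrightarrow>
        PMI M (rep i) (minus_i M i rep) > 0 \<longrightarrow>
        L \<le> ln (PMI M (rep i) (minus_i M i rep)) \<and> ln (PMI M (rep i) (minus_i M i rep)) \<le> R)"

end

theory Submission
  imports Defs
begin

definition sv :: "('x,'m::finite) emodel \<Rightarrow> 'x list \<Rightarrow> real^'m" where
  "sv M xs = nu0 M *\<^sub>R tau0 M + sum_list (map (phi M) xs)"

definition gg :: "('x,'m::finite) emodel \<Rightarrow> 'x list \<Rightarrow> real" where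
  "gg M xs = gnorm M (nu_of M xs) (tau_of M xs)"

definition KK :: "('x,'m::finite) emodel \<Rightarrow> 'x list \<Rightarrow> real^'m \<Rightarrow> real" where
  "KK M xs = conj_kernel M (nu_of M xs) (tau_of M xs)"


definition II :: "('x,'m::finite) emodel \<Rightarrow> nat \<Rightarrow> nat set" where
  "II M i = {..<nprov M} - {i}"
definition HH :: "('x,'m::finite) emodel \<Rightarrow> nat \<Rightarrow> (nat \<Rightarrow> nat \<Rightarrow> 'x) \<Rightarrow> real" where
  "HH M i Dm = (\<Prod>j\<in>II M i. \<Prod>k<Nsz M j. hb M (Dm j k))"
definition VV :: "('x,'m::finite) emodel \<Rightarrow> nat \<Rightarrow> (nat \<Rightarrow> nat \<Rightarrow> 'x) \<Rightarrow> real^'m" where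
  "VV M i Dm = (\<Sum>j\<in>II M i. \<Sum>k<Nsz M j. phi M (Dm j k))"
definition NN :: "('x,'m::finite) emodel \<Rightarrow> nat \<Rightarrow> nat" where
  "NN M i = (\<Sum>j\<in>II M i. Nsz M j)"


lemma sum_list_map_concat: "sum_list (map f (concat xss)) = sum_list (map (\<lambda>xs. sum_list (map f xs)) xss)"
  by (induct xss) auto

context fixes M :: "('x,'m::finite) emodel" assumes vm: "valid_model M"
begin

lemma nu0_pos: "nu0 M > 0" using vm unfolding valid_model_def by auto

lemma nu_pos: "nu_of M xs > 0" using nu0_pos unfolding nu_of_def by auto

lemma nu_tau: "nu_of M xs *\<^sub>R tau_of M xs = sv M xs"
  using nu_pos[of xs] unfolding tau_of_def sv_def by auto

lemma KK_eq: "KK M xs \<theta> = exp (\<theta> \<bullet> sv M xs - nu_of M xs * Apart M \<theta>)"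
proof -
  have "nu_of M xs * (\<theta> \<bullet> tau_of M xs) = \<theta> \<bullet> sv M xs"
    using nu_tau[of xs] by (metis inner_scaleR_right)
  then show ?thesis unfolding KK_def conj_kernel_def by simp
qed

lemma KK_int: "xs \<in> lists (space (Xsp M)) \<Longrightarrow>
   set_integrable lborel (Theta M) (KK M xs) \<and> (LINT \<theta>:Theta M|lborel. KK M xs \<theta>) > 0"
  using vm unfolding valid_model_def KK_def by auto

lemma gg_pos: "xs \<in> lists (space (Xsp M)) \<Longrightarrow> gg M xs > 0"
  using KK_int[of xs] unfolding gg_def gnorm_def KK_def by auto

lemma int_KK: "xs \<in> lists (space (Xsp M)) \<Longrightarrow> (LINT \<theta>:Theta M|lborel. KK M xs \<theta>) = 1 / gg M xs"
  using KK_int[of xs] unfolding gg_def gnorm_def KK_def by auto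

lemma post_eq: "post M xs \<theta> = gg M xs * KK M xs \<theta>"
  unfolding post_def conj_def gg_def KK_def by simp

lemma nu_nil: "nu_of M [] = nu0 M" unfolding nu_of_def by simp
lemma tau_nil: "tau_of M [] = tau0 M" using nu0_pos unfolding tau_of_def nu_of_def by simp

lemma prior_eq: "prior M = post M []"
  unfolding prior_def post_def nu_nil tau_nil ..

lemma sv_app: "sv M (xs @ ys) = sv M xs + sv M ys - sv M []"
  unfolding sv_def by simp

lemma nu_app: "nu_of M (xs @ ys) = nu_of M xs + nu_of M ys - nu_of M []"
  unfolding nu_of_def by simp

lemma KK_app: "KK M xs \<theta> * KK M ys \<theta> / KK M [] \<theta> = KK M (xs @ ys) \<theta>"
  unfolding KK_eq sv_app nu_app
  by (simp add: exp_add[symmetric] exp_diff[symmetric] inner_diff_right inner_add_right algebra_simps)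

lemma PMI_eq: assumes "xs \<in> lists (space (Xsp M))" "ys \<in> lists (space (Xsp M))"
  shows "PMI M xs ys = gg M xs * gg M ys / gg M [] / gg M (xs @ ys)"
proof -
  have "PMI M xs ys = (LINT \<theta>:Theta M|lborel. (gg M xs * gg M ys / gg M []) * KK M (xs @ ys) \<theta>)"
    unfolding PMI_def prior_eq post_eq KK_app[symmetric] by (simp add: field_simps)
  also have "\<dots> = (gg M xs * gg M ys / gg M []) * (1 / gg M (xs @ ys))"
    using assms by (simp add: set_integral_mult_right int_KK)
  finally show ?thesis by simp
qed

lemma hfun_eq: "hfun M ys (params M xs) = gg M xs / gg M (xs @ ys)"
proof -
  have a: "nu_of M xs + nu_of M ys - nu0 M = nu_of M (xs @ ys)" using nu_app nu_nil by simp
  have b: "nu_of M xs *\<^sub>R tau_of M xs + nu_of M ys *\<^sub>R tau_of M ys - nu0 M *\<^sub>R tau0 M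
     = sv M (xs @ ys)" unfolding nu_tau sv_app by (simp add: sv_def)
  show ?thesis unfolding hfun_def params_def Let_def fst_conv snd_conv a b gg_def
    by (simp add: tau_of_def sv_def)
qed

lemma PMI_hfun: assumes "xs \<in> lists (space (Xsp M))" "ys \<in> lists (space (Xsp M))"
  shows "PMI M xs ys = hfun M ys (params M xs) * (gg M ys / gg M [])"
  unfolding PMI_eq[OF assms] hfun_eq by simp


lemma others_set: "set (others M i) = II M i" unfolding others_def II_def by auto
lemma others_dist: "distinct (others M i)" unfolding others_def by auto
lemma fin_II: "finite (II M i)" unfolding II_def by auto

lemma sum_dl: "sum_list (map (phi M) (data_list M Dm j)) = (\<Sum>k<Nsz M j. phi M (Dm j k))"
  unfolding data_list_def by (simp add: sum_list_sum_nth atLeast0LessThan)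

lemma V_eq: "sum_list (map (phi M) (data_minus M i Dm)) = VV M i Dm"
proof -
  have "sum_list (map (phi M) (data_minus M i Dm))
      = sum_list (map (\<lambda>j. sum_list (map (phi M) (data_list M Dm j))) (others M i))"
    unfolding data_minus_def by (simp add: sum_list_map_concat comp_def)
  also have "\<dots> = (\<Sum>j\<in>II M i. sum_list (map (phi M) (data_list M Dm j)))"
    using sum_list_distinct_conv_sum_set[OF others_dist] others_set by metis
  finally show ?thesis unfolding VV_def sum_dl .
qed

lemma len_eq: "length (data_minus M i Dm) = NN M i"
proof -
  have "length (data_minus M i Dm) = sum_list (map (\<lambda>j. Nsz M j) (others M i))"
    unfolding data_minus_def by (simp add: length_concat comp_def data_list_def)
  also have "\<dots> = NN M i"
    unfolding NN_def using sum_list_distinct_conv_sum_set[OF others_dist] others_set by metis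
  finally show ?thesis .
qed

lemma space_Pm: "Dm \<in> space (Pm M i) \<Longrightarrow> j \<in> II M i \<Longrightarrow> k < Nsz M j \<Longrightarrow> Dm j k \<in> space (Xsp M)"
  unfolding Pm_def II_def space_PiM by (auto simp: PiE_def Pi_def)

lemma dl_ds: "Dm \<in> space (Pm M i) \<Longrightarrow> j \<in> II M i \<Longrightarrow> data_list M Dm j \<in> datasets M j"
  unfolding datasets_def data_list_def using space_Pm by auto

lemma dm_lists: "Dm \<in> space (Pm M i) \<Longrightarrow> data_minus M i Dm \<in> lists (space (Xsp M))"
  unfolding data_minus_def using dl_ds others_set unfolding datasets_def by fastforce

lemma lik_minus_eq: "lik_minus M i \<theta> Dm = HH M i Dm * exp (\<theta> \<bullet> VV M i Dm - real (NN M i) * Apart M \<theta>)"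
proof -
  have "lik_minus M i \<theta> Dm = (\<Prod>j\<in>II M i. \<Prod>k<Nsz M j. hb M (Dm j k) * exp (\<theta> \<bullet> phi M (Dm j k) - Apart M \<theta>))"
    unfolding lik_minus_def lik_def II_def ..
  also have "\<dots> = HH M i Dm * (\<Prod>j\<in>II M i. \<Prod>k<Nsz M j. exp (\<theta> \<bullet> phi M (Dm j k) - Apart M \<theta>))"
    unfolding HH_def prod.distrib ..
  also have "(\<Prod>j\<in>II M i. \<Prod>k<Nsz M j. exp (\<theta> \<bullet> phi M (Dm j k) - Apart M \<theta>))
     = exp (\<Sum>j\<in>II M i. \<Sum>k<Nsz M j. (\<theta> \<bullet> phi M (Dm j k) - Apart M \<theta>))"
    by (simp add: exp_sum fin_II)
  also have "(\<Sum>j\<in>II M i. \<Sum>k<Nsz M j. (\<theta> \<bullet> phi M (Dm j k) - Apart M \<theta>))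
     = \<theta> \<bullet> VV M i Dm - real (NN M i) * Apart M \<theta>"
    unfolding VV_def NN_def by (simp add: sum_subtractf inner_sum_right sum_distrib_right)
  finally show ?thesis .
qed

lemma KK_dm: "KK M (xs @ data_minus M i Dm) \<theta>
   = exp (\<theta> \<bullet> (sv M xs + VV M i Dm) - (nu_of M xs + real (NN M i)) * Apart M \<theta>)"
  unfolding KK_eq by (simp add: sv_def nu_of_def V_eq len_eq algebra_simps)


abbreviation "SX \<equiv> space (Xsp M)"

lemma hb_nn: "x \<in> SX \<Longrightarrow> hb M x \<ge> 0" using vm unfolding valid_model_def by auto

lemma HH_nn: "Dm \<in> space (Pm M i) \<Longrightarrow> HH M i Dm \<ge> 0"
  unfolding HH_def by (intro prod_nonneg hb_nn space_Pm) auto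

lemma post_lik: "post M xs \<theta> * lik_minus M i \<theta> Dm = gg M xs * HH M i Dm * KK M (xs @ data_minus M i Dm) \<theta>"
  unfolding post_eq lik_minus_eq KK_dm unfolding KK_eq
  by (simp add: exp_add[symmetric] inner_add_right algebra_simps)

lemma app_lists: "xs \<in> lists SX \<Longrightarrow> Dm \<in> space (Pm M i) \<Longrightarrow> xs @ data_minus M i Dm \<in> lists SX"
  using dm_lists by auto

lemma cond_eq: assumes "xs \<in> lists SX" "Dm \<in> space (Pm M i)"
  shows "cond_dens M i xs Dm = gg M xs * HH M i Dm / gg M (xs @ data_minus M i Dm)"
  unfolding cond_dens_def post_lik
  using int_KK[OF app_lists[OF assms]] by (simp add: set_integral_mult_right)

lemma marg_cond: "marg_dens M i = cond_dens M i []"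
  unfolding marg_dens_def cond_dens_def prior_eq ..

lemma marg_eq: assumes "Dm \<in> space (Pm M i)"
  shows "marg_dens M i Dm = gg M [] * HH M i Dm / gg M (data_minus M i Dm)"
  using cond_eq[OF _ assms, of "[]"] unfolding marg_cond by simp

lemma marg_nn: "Dm \<in> space (Pm M i) \<Longrightarrow> marg_dens M i Dm \<ge> 0"
proof -
  assume a: "Dm \<in> space (Pm M i)"
  show ?thesis unfolding marg_eq[OF a]
    using HH_nn[OF a] gg_pos[of "[]"] gg_pos[OF dm_lists[OF a]] by simp
qed

lemma cond_PMI: assumes "xs \<in> lists SX" "Dm \<in> space (Pm M i)"
  shows "cond_dens M i xs Dm = PMI M xs (data_minus M i Dm) * marg_dens M i Dm"
  unfolding cond_eq[OF assms] marg_eq[OF assms(2)] PMI_eq[OF assms(1) dm_lists[OF assms(2)]]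
  using gg_pos[OF assms(1)] gg_pos[of "[]"] gg_pos[OF dm_lists[OF assms(2)]] by simp

lemma PMI_pos: assumes "xs \<in> lists SX" "Dm \<in> space (Pm M i)"
  shows "PMI M xs (data_minus M i Dm) > 0"
  unfolding PMI_eq[OF assms(1) dm_lists[OF assms(2)]]
  using gg_pos[OF assms(1)] gg_pos[of "[]"] gg_pos[OF dm_lists[OF assms(2)]]
    gg_pos[OF app_lists[OF assms]] by simp

lemma meas_comp: assumes "j \<in> II M i" "k < Nsz M j"
  shows "(\<lambda>Dm. Dm j k) \<in> Pm M i \<rightarrow>\<^sub>M Xsp M"
proof -
  have "(\<lambda>Dm. Dm j) \<in> Pm M i \<rightarrow>\<^sub>M PiM {..<Nsz M j} (\<lambda>_. Xsp M)"
    unfolding Pm_def using assms(1) unfolding II_def by (rule measurable_component_singleton)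
  moreover have "(\<lambda>x. x k) \<in> PiM {..<Nsz M j} (\<lambda>_. Xsp M) \<rightarrow>\<^sub>M Xsp M"
    using assms(2) by (intro measurable_component_singleton) auto
  ultimately show ?thesis using measurable_compose by fast
qed

lemma phi_meas: "phi M \<in> borel_measurable (Xsp M)" using vm unfolding valid_model_def by auto
lemma hb_meas: "hb M \<in> borel_measurable (Xsp M)" using vm unfolding valid_model_def by auto
lemma A_meas: "Apart M \<in> borel_measurable lborel" using vm unfolding valid_model_def by auto
lemma Theta_sets: "Theta M \<in> sets lborel" using vm unfolding valid_model_def by auto

lemma VV_meas: "VV M i \<in> borel_measurable (Pm M i)"
  unfolding VV_def
  by (intro borel_measurable_sum measurable_compose[OF meas_comp phi_meas]) auto

lemma HH_meas: "HH M i \<in> borel_measurable (Pm M i)"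
  unfolding HH_def
  by (intro borel_measurable_prod measurable_compose[OF meas_comp hb_meas]) auto



lemma Jf_meas: "(\<lambda>Dm. LINT \<theta>:Theta M|lborel. KK M (xs @ data_minus M i Dm) \<theta>) \<in> borel_measurable (Pm M i)"
proof -
  note [measurable] = VV_meas A_meas Theta_sets
  have "(\<lambda>p. indicator (Theta M) (snd p) *\<^sub>R exp (snd p \<bullet> (sv M xs + VV M i (fst p))
      - (nu_of M xs + real (NN M i)) * Apart M (snd p))) \<in> borel_measurable (Pm M i \<Otimes>\<^sub>M lborel)"
    by measurable
  then have "(\<lambda>Dm. \<integral>\<theta>. indicator (Theta M) \<theta> *\<^sub>R exp (\<theta> \<bullet> (sv M xs + VV M i Dm)
      - (nu_of M xs + real (NN M i)) * Apart M \<theta>) \<partial>lborel) \<in> borel_measurable (Pm M i)"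
    by (intro lborel.borel_measurable_lebesgue_integral) (simp add: case_prod_beta')
  then show ?thesis unfolding set_lebesgue_integral_def KK_dm .
qed


lemma gg_app_inv: "xs \<in> lists SX \<Longrightarrow> Dm \<in> space (Pm M i) \<Longrightarrow>
   1 / gg M (xs @ data_minus M i Dm) = (LINT \<theta>:Theta M|lborel. KK M (xs @ data_minus M i Dm) \<theta>)"
  using int_KK[OF app_lists] by simp

lemma cond_meas: assumes "xs \<in> lists SX" shows "cond_dens M i xs \<in> borel_measurable (Pm M i)"
proof -
  have "(\<lambda>Dm. gg M xs * HH M i Dm * (LINT \<theta>:Theta M|lborel. KK M (xs @ data_minus M i Dm) \<theta>))
     \<in> borel_measurable (Pm M i)" using Jf_meas HH_meas by measurable
  then show ?thesis
    by (rule measurable_cong[THEN iffD1, rotated])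
       (simp add: cond_eq[OF assms] gg_app_inv[OF assms, symmetric])
qed

lemma marg_meas: "marg_dens M i \<in> borel_measurable (Pm M i)"
  unfolding marg_cond by (rule cond_meas) simp

lemma PMI_meas: assumes "xs \<in> lists SX"
  shows "(\<lambda>Dm. PMI M xs (data_minus M i Dm)) \<in> borel_measurable (Pm M i)"
proof -
  have "(\<lambda>Dm. gg M xs * (LINT \<theta>:Theta M|lborel. KK M (xs @ data_minus M i Dm) \<theta>) /
      (gg M [] * (LINT \<theta>:Theta M|lborel. KK M ([] @ data_minus M i Dm) \<theta>)))
     \<in> borel_measurable (Pm M i)" using Jf_meas[of xs] Jf_meas[of "[]"] by measurable
  then show ?thesis
  proof (rule measurable_cong[THEN iffD1, rotated])
    fix Dm assume d: "Dm \<in> space (Pm M i)"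
    show "gg M xs * (LINT \<theta>:Theta M|lborel. KK M (xs @ data_minus M i Dm) \<theta>) /
      (gg M [] * (LINT \<theta>:Theta M|lborel. KK M ([] @ data_minus M i Dm) \<theta>)) =
      PMI M xs (data_minus M i Dm)"
      unfolding gg_app_inv[OF assms d, symmetric] append_Nil int_KK[OF dm_lists[OF d]]
        PMI_eq[OF assms dm_lists[OF d]] by simp
  qed
qed

lemma hfun_meas: assumes "xs \<in> lists SX"
  shows "(\<lambda>Dm. hfun M (data_minus M i Dm) (params M xs)) \<in> borel_measurable (Pm M i)"
proof -
  have "(\<lambda>Dm. gg M xs * (LINT \<theta>:Theta M|lborel. KK M (xs @ data_minus M i Dm) \<theta>))
     \<in> borel_measurable (Pm M i)" using Jf_meas[of xs] by measurable
  then show ?thesis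
  proof (rule measurable_cong[THEN iffD1, rotated])
    fix Dm assume d: "Dm \<in> space (Pm M i)"
    show "gg M xs * (LINT \<theta>:Theta M|lborel. KK M (xs @ data_minus M i Dm) \<theta>) =
      hfun M (data_minus M i Dm) (params M xs)"
      unfolding hfun_eq gg_app_inv[OF assms d, symmetric] by simp
  qed
qed


lemma sf_X: "sigma_finite_measure (Xsp M)" using vm unfolding valid_model_def by auto

lemma psf_inner: "product_sigma_finite (\<lambda>_::nat. Xsp M)"
  unfolding product_sigma_finite_def using sf_X by auto

lemma psf_outer: "product_sigma_finite (\<lambda>j. PiM {..<Nsz M j} (\<lambda>_. Xsp M))"
  unfolding product_sigma_finite_def using product_sigma_finite.sigma_finite[OF psf_inner] by auto

lemma sf_Pm: "sigma_finite_measure (Pm M i)"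
  unfolding Pm_def by (rule product_sigma_finite.sigma_finite[OF psf_outer]) (auto)

lemma lik_nn: "x \<in> SX \<Longrightarrow> lik M \<theta> x \<ge> 0" unfolding lik_def using hb_nn by auto

lemma lik_meas: "lik M \<theta> \<in> borel_measurable (Xsp M)"
  unfolding lik_def using hb_meas phi_meas by measurable

lemma lik_int1: assumes "\<theta> \<in> Theta M" shows "(\<integral>\<^sup>+x. ennreal (lik M \<theta> x) \<partial>Xsp M) = 1"
proof -
  have "integrable (Xsp M) (lik M \<theta>)" "(\<integral>x. lik M \<theta> x \<partial>Xsp M) = 1"
    using vm assms unfolding valid_model_def by auto
  then show ?thesis using nn_integral_eq_integral[of "Xsp M" "lik M \<theta>"] lik_nn by (auto intro: AE_I2)
qed

lemma inner_int1: assumes "\<theta> \<in> Theta M"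
  shows "(\<integral>\<^sup>+x. (\<Prod>k<(n::nat). ennreal (lik M \<theta> (x k))) \<partial>PiM {..<n} (\<lambda>_. Xsp M)) = 1"
  using product_sigma_finite.product_nn_integral_prod[OF psf_inner, of "{..<n}" "\<lambda>_. \<lambda>x. ennreal (lik M \<theta> x)"]
    lik_int1[OF assms] lik_meas by simp

lemma lik_minus_int1: assumes "\<theta> \<in> Theta M"
  shows "(\<integral>\<^sup>+Dm. ennreal (lik_minus M i \<theta> Dm) \<partial>Pm M i) = 1"
proof -
  have "(\<integral>\<^sup>+Dm. ennreal (lik_minus M i \<theta> Dm) \<partial>Pm M i)
     = (\<integral>\<^sup>+Dm. (\<Prod>j\<in>II M i. (\<lambda>x. \<Prod>k<Nsz M j. ennreal (lik M \<theta> (x k))) (Dm j)) \<partial>Pm M i)"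
  proof (rule nn_integral_cong)
    fix Dm assume d: "Dm \<in> space (Pm M i)"
    show "ennreal (lik_minus M i \<theta> Dm) = (\<Prod>j\<in>II M i. (\<lambda>x. \<Prod>k<Nsz M j. ennreal (lik M \<theta> (x k))) (Dm j))"
    proof -
      have nn: "j \<in> II M i \<Longrightarrow> k < Nsz M j \<Longrightarrow> lik M \<theta> (Dm j k) \<ge> 0" for j k
        using lik_nn space_Pm[OF d] by auto
      have "ennreal (lik_minus M i \<theta> Dm) = (\<Prod>j\<in>II M i. ennreal (\<Prod>k<Nsz M j. lik M \<theta> (Dm j k)))"
        unfolding lik_minus_def II_def[symmetric]
        by (rule prod_ennreal[symmetric]) (auto intro!: prod_nonneg nn)
      also have "\<dots> = (\<Prod>j\<in>II M i. (\<Prod>k<Nsz M j. ennreal (lik M \<theta> (Dm j k))))"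
        by (intro prod.cong refl prod_ennreal[symmetric]) (auto intro!: nn)
      finally show ?thesis by simp
    qed
  qed
  also have "\<dots> = (\<Prod>j\<in>II M i. (\<integral>\<^sup>+x. (\<Prod>k<Nsz M j. ennreal (lik M \<theta> (x k))) \<partial>PiM {..<Nsz M j} (\<lambda>_. Xsp M)))"
    unfolding Pm_def II_def[symmetric]
    apply (rule product_sigma_finite.product_nn_integral_prod[OF psf_outer fin_II])
    using lik_meas by measurable
  also have "\<dots> = 1" using inner_int1[OF assms] by simp
  finally show ?thesis .
qed


lemma lik_minus_nn: "Dm \<in> space (Pm M i) \<Longrightarrow> lik_minus M i \<theta> Dm \<ge> 0"
  unfolding lik_minus_eq using HH_nn by auto

lemma post_pos: "xs \<in> lists SX \<Longrightarrow> post M xs \<theta> > 0"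
  unfolding post_eq using gg_pos by (simp add: KK_eq)

lemma post_set_int: assumes "xs \<in> lists SX"
  shows "integrable lborel (\<lambda>\<theta>. indicator (Theta M) \<theta> * post M xs \<theta>)"
    "(\<integral>\<theta>. indicator (Theta M) \<theta> * post M xs \<theta> \<partial>lborel) = 1"
proof -
  have "set_integrable lborel (Theta M) (KK M xs)" using KK_int[OF assms] by auto
  then have "integrable lborel (\<lambda>\<theta>. gg M xs * (indicator (Theta M) \<theta> * KK M xs \<theta>))"
    unfolding set_integrable_def by simp
  then show "integrable lborel (\<lambda>\<theta>. indicator (Theta M) \<theta> * post M xs \<theta>)"
    unfolding post_eq by (simp add: algebra_simps)
  have "(\<integral>\<theta>. indicator (Theta M) \<theta> * post M xs \<theta> \<partial>lborel) = (LINT \<theta>:Theta M|lborel. gg M xs * KK M xs \<theta>)"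
    unfolding set_lebesgue_integral_def post_eq by simp
  also have "\<dots> = 1" using int_KK[OF assms] gg_pos[OF assms] by (simp add: set_integral_mult_right)
  finally show "(\<integral>\<theta>. indicator (Theta M) \<theta> * post M xs \<theta> \<partial>lborel) = 1" .
qed

lemma cond_int1: assumes xs: "xs \<in> lists SX"
  shows "integrable (Pm M i) (cond_dens M i xs)" "integral\<^sup>L (Pm M i) (cond_dens M i xs) = 1"
proof -
  define F where "F = (\<lambda>(Dm, \<theta>). ennreal (indicator (Theta M) \<theta> * (post M xs \<theta> * lik_minus M i \<theta> Dm)))"
  have a: "ennreal (cond_dens M i xs Dm) = (\<integral>\<^sup>+\<theta>. F (Dm, \<theta>) \<partial>lborel)" if d: "Dm \<in> space (Pm M i)" for Dm
  proof -
    have "set_integrable lborel (Theta M) (KK M (xs @ data_minus M i Dm))"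
      using KK_int[OF app_lists[OF xs d]] by auto
    then have "integrable lborel (\<lambda>\<theta>. (gg M xs * HH M i Dm) * (indicator (Theta M) \<theta> * KK M (xs @ data_minus M i Dm) \<theta>))"
      unfolding set_integrable_def by simp
    then have int: "integrable lborel (\<lambda>\<theta>. indicator (Theta M) \<theta> * (post M xs \<theta> * lik_minus M i \<theta> Dm))"
      unfolding post_lik by (simp add: algebra_simps)
    have "(\<integral>\<^sup>+\<theta>. F (Dm, \<theta>) \<partial>lborel) = ennreal (\<integral>\<theta>. indicator (Theta M) \<theta> * (post M xs \<theta> * lik_minus M i \<theta> Dm) \<partial>lborel)"
      unfolding F_def prod.case using int 
      by (intro nn_integral_eq_integral AE_I2) (auto intro!: mult_nonneg_nonneg less_imp_le[OF post_pos[OF xs]] lik_minus_nn[OF d])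
    then show ?thesis unfolding cond_dens_def set_lebesgue_integral_def by simp
  qed
  have Fm: "F \<in> borel_measurable (Pm M i \<Otimes>\<^sub>M lborel)"
  proof -
    note [measurable] = VV_meas A_meas Theta_sets HH_meas
    have "(\<lambda>p. ennreal (indicator (Theta M) (snd p) * (gg M xs * HH M i (fst p) * exp (snd p \<bullet> (sv M xs + VV M i (fst p))
      - (nu_of M xs + real (NN M i)) * Apart M (snd p))))) \<in> borel_measurable (Pm M i \<Otimes>\<^sub>M lborel)"
      by measurable
    then show ?thesis unfolding F_def post_lik KK_dm by (simp add: case_prod_beta')
  qed
  have psf: "pair_sigma_finite (Pm M i) lborel"
    unfolding pair_sigma_finite_def using sf_Pm lborel.sigma_finite_measure_axioms by auto
  have c: "(\<integral>\<^sup>+Dm. F (Dm, \<theta>) \<partial>Pm M i) = ennreal (indicator (Theta M) \<theta> * post M xs \<theta>)" for \<theta>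
  proof -
    have lm: "(\<lambda>Dm. ennreal (lik_minus M i \<theta> Dm)) \<in> borel_measurable (Pm M i)"
    proof -
      note [measurable] = VV_meas HH_meas
      have "(\<lambda>Dm. ennreal (HH M i Dm * exp (\<theta> \<bullet> VV M i Dm - real (NN M i) * Apart M \<theta>))) \<in> borel_measurable (Pm M i)"
        by measurable
      then show ?thesis unfolding lik_minus_eq .
    qed
    have "(\<integral>\<^sup>+Dm. F (Dm, \<theta>) \<partial>Pm M i) = (\<integral>\<^sup>+Dm. ennreal (indicator (Theta M) \<theta> * post M xs \<theta>) * ennreal (lik_minus M i \<theta> Dm) \<partial>Pm M i)"
      unfolding F_def prod.case
    proof (intro nn_integral_cong)
      fix Dm assume "Dm \<in> space (Pm M i)"
      then have "lik_minus M i \<theta> Dm \<ge> 0" by (rule lik_minus_nn)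
      moreover have "indicator (Theta M) \<theta> * post M xs \<theta> \<ge> 0" using post_pos[OF xs, of \<theta>] by simp
      ultimately show "ennreal (indicator (Theta M) \<theta> * (post M xs \<theta> * lik_minus M i \<theta> Dm)) =
        ennreal (indicator (Theta M) \<theta> * post M xs \<theta>) * ennreal (lik_minus M i \<theta> Dm)"
        by (simp add: ennreal_mult[symmetric] mult.assoc)
    qed
    also have "\<dots> = ennreal (indicator (Theta M) \<theta> * post M xs \<theta>) * (\<integral>\<^sup>+Dm. ennreal (lik_minus M i \<theta> Dm) \<partial>Pm M i)"
      by (rule nn_integral_cmult[OF lm])
    also have "\<dots> = ennreal (indicator (Theta M) \<theta> * post M xs \<theta>)"
      by (cases "\<theta> \<in> Theta M") (auto simp: lik_minus_int1)
    finally show ?thesis .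
  qed
  have "(\<integral>\<^sup>+Dm. ennreal (cond_dens M i xs Dm) \<partial>Pm M i) = (\<integral>\<^sup>+Dm. (\<integral>\<^sup>+\<theta>. F (Dm, \<theta>) \<partial>lborel) \<partial>Pm M i)"
    using a by (intro nn_integral_cong) auto
  also have "\<dots> = (\<integral>\<^sup>+\<theta>. (\<integral>\<^sup>+Dm. F (Dm, \<theta>) \<partial>Pm M i) \<partial>lborel)"
    using pair_sigma_finite.Fubini[OF psf Fm] by simp
  also have "\<dots> = (\<integral>\<^sup>+\<theta>. ennreal (indicator (Theta M) \<theta> * post M xs \<theta>) \<partial>lborel)"
    unfolding c ..
  also have "\<dots> = 1"
    using post_set_int[OF xs] post_pos[OF xs]
    by (subst nn_integral_eq_integral) (auto intro!: AE_I2 simp: less_imp_le)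
  finally have nn: "(\<integral>\<^sup>+Dm. ennreal (cond_dens M i xs Dm) \<partial>Pm M i) = ennreal 1" by simp
  have pos: "AE Dm in Pm M i. 0 \<le> cond_dens M i xs Dm"
  proof (rule AE_I2)
    fix Dm assume d: "Dm \<in> space (Pm M i)"
    show "0 \<le> cond_dens M i xs Dm" unfolding cond_PMI[OF xs d]
      using PMI_pos[OF xs d] marg_nn[OF d] by simp
  qed
  show "integrable (Pm M i) (cond_dens M i xs)"
    by (rule integrableI_nn_integral_finite[OF cond_meas[OF xs] pos nn])
  show "integral\<^sup>L (Pm M i) (cond_dens M i xs) = 1"
    using integral_eq_nn_integral[OF cond_meas[OF xs] pos] nn by simp
qed


lemma ds_lists: "xs \<in> datasets M j \<Longrightarrow> xs \<in> lists SX"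
  unfolding datasets_def by auto

lemma params_eq_D: assumes "params M a = params M b"
  shows "length a = length b \<and> sum_list (map (phi M) a) = sum_list (map (phi M) b)"
proof -
  have n: "nu_of M a = nu_of M b" and t: "tau_of M a = tau_of M b"
    using assms unfolding params_def by auto
  have "sv M a = sv M b" using nu_tau[of a] nu_tau[of b] n t by metis
  then show ?thesis using n unfolding sv_def nu_of_def by auto
qed

lemma concat_params:
  assumes "\<And>j. j \<in> set js \<Longrightarrow> params M (F j) = params M (G j)"
  shows "post M (concat (map F js)) = post M (concat (map G js))"
proof -
  have "length (concat (map F js)) = length (concat (map G js)) \<and>
    sum_list (map (phi M) (concat (map F js))) = sum_list (map (phi M) (concat (map G js)))"
    using assms
  proof (induct js)
    case Nil then show ?case by simp
  next
    case (Cons a js)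
    then show ?case using params_eq_D[of "F a" "G a"] by simp
  qed
  then show ?thesis unfolding post_def nu_of_def tau_of_def by simp
qed

lemma params_PMI: "params M a = params M b \<Longrightarrow> PMI M a ys = PMI M b ys"
  unfolding PMI_def post_def params_def by simp

definition "validf i f \<longleftrightarrow> (\<forall>j<nprov M. j \<noteq> i \<longrightarrow>
   (\<forall>D\<in>datasets M j. f j D \<in> datasets M j \<and> params M (f j D) = params M D))"

lemma pay_eq: assumes mo: "mech_ok M B L R" and i: "i < nprov M" and rep: "rep \<in> datasets M i"
  and f: "validf i f" and d: "Dm \<in> space (Pm M i)"
  shows "payment M B L R i (\<lambda>j. if j = i then rep else f j (data_list M Dm j))
     = B / real (nprov M) * ((ln (PMI M rep (data_minus M i Dm)) - L) / (R - L))"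
   and "L \<le> ln (PMI M rep (data_minus M i Dm))" "ln (PMI M rep (data_minus M i Dm)) \<le> R"
proof -
  define rep' where "rep' = (\<lambda>j. if j = i then rep else f j (data_list M Dm j))"
  have oth: "j \<in> set (others M i) \<Longrightarrow> j < nprov M \<and> j \<noteq> i" for j unfolding others_def by auto
  have mi: "minus_i M i rep' = concat (map (\<lambda>j. f j (data_list M Dm j)) (others M i))"
    unfolding minus_i_def rep'_def using oth by (intro arg_cong[where f=concat] map_cong) auto
  have "post M (concat (map (\<lambda>j. f j (data_list M Dm j)) (others M i))) = post M (data_minus M i Dm)"
    unfolding data_minus_def
    using f dl_ds[OF d] oth unfolding validf_def II_def by (intro concat_params) auto
  then have pe: "post M (minus_i M i rep') = post M (data_minus M i Dm)" unfolding mi .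
  have P: "PMI M (rep' i) (minus_i M i rep') = PMI M rep (data_minus M i Dm)"
    unfolding PMI_def pe by (simp add: rep'_def)
  have all: "\<forall>j<nprov M. rep' j \<in> datasets M j"
    unfolding rep'_def using rep f dl_ds[OF d] unfolding validf_def II_def by auto
  have pos: "PMI M rep (data_minus M i Dm) > 0" using PMI_pos[OF ds_lists[OF rep] d] .
  have "L \<le> ln (PMI M (rep' i) (minus_i M i rep')) \<and> ln (PMI M (rep' i) (minus_i M i rep')) \<le> R"
    using mo i all pos P unfolding mech_ok_def by metis
  then show "L \<le> ln (PMI M rep (data_minus M i Dm))" "ln (PMI M rep (data_minus M i Dm)) \<le> R"
    unfolding P by auto
  show "payment M B L R i rep' = B / real (nprov M) * ((ln (PMI M rep (data_minus M i Dm)) - L) / (R - L))"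
    unfolding payment_def Let_def P using pos by simp
qed


lemma ln_strict: fixes x :: real assumes "x > 0" "x \<noteq> 1" shows "ln x < x - 1"
proof -
  have s: "sqrt x > 0" "sqrt x \<noteq> 1" using assms by auto
  have "ln x = 2 * ln (sqrt x)" using assms by (simp add: ln_sqrt)
  also have "\<dots> \<le> 2 * (sqrt x - 1)" using ln_le_minus_one[OF s(1)] by simp
  also have "\<dots> < x - 1"
  proof -
    have "(sqrt x - 1)^2 > 0" using s by simp
    then show ?thesis using assms by (simp add: power2_eq_square algebra_simps)
  qed
  finally show ?thesis .
qed

lemma gibbs: fixes a b :: real assumes "a > 0" "b > 0" shows "a * (ln a - ln b) \<ge> a - b"
  and "a \<noteq> b \<Longrightarrow> a * (ln a - ln b) > a - b"
proof -
  have e: "ln (b / a) = ln b - ln a" using assms by (simp add: ln_div)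
  have "ln (b / a) \<le> b / a - 1" using assms by (intro ln_le_minus_one) simp
  then have "a * (ln b - ln a) \<le> a * (b / a - 1)" unfolding e using assms by (intro mult_left_mono) auto
  then show "a * (ln a - ln b) \<ge> a - b" using assms by (simp add: algebra_simps)
  assume "a \<noteq> b"
  then have "b / a \<noteq> 1" using assms by simp
  then have "ln (b / a) < b / a - 1" using assms by (intro ln_strict) simp_all
  then have "a * (ln b - ln a) < a * (b / a - 1)" unfolding e using assms by (intro mult_strict_left_mono) auto
  then show "a * (ln a - ln b) > a - b" using assms by (simp add: algebra_simps)
qed

lemma Epay: assumes mo: "mech_ok M B L R" and i: "i < nprov M" and Di: "Di \<in> datasets M i"
  and rep: "rep \<in> datasets M i" and f: "validf i f"
  shows "exp_pay M B L R i Di f rep = (\<integral>Dm. cond_dens M i Di Dm *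
      (B / real (nprov M) * ((ln (PMI M rep (data_minus M i Dm)) - L) / (R - L))) \<partial>Pm M i)"
    "integrable (Pm M i) (\<lambda>Dm. cond_dens M i Di Dm *
      (B / real (nprov M) * ((ln (PMI M rep (data_minus M i Dm)) - L) / (R - L))))"
proof -
  show "exp_pay M B L R i Di f rep = (\<integral>Dm. cond_dens M i Di Dm *
      (B / real (nprov M) * ((ln (PMI M rep (data_minus M i Dm)) - L) / (R - L))) \<partial>Pm M i)"
    unfolding exp_pay_def
    by (intro Bochner_Integration.integral_cong refl) (simp add: pay_eq(1)[OF mo i rep f])
  have BLR: "B > 0" "L < R" using mo unfolding mech_ok_def by auto
  have xs: "Di \<in> lists SX" "rep \<in> lists SX" using Di rep ds_lists by auto
  have m: "(\<lambda>Dm. cond_dens M i Di Dm *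
      (B / real (nprov M) * ((ln (PMI M rep (data_minus M i Dm)) - L) / (R - L)))) \<in> borel_measurable (Pm M i)"
    using cond_meas[OF xs(1)] PMI_meas[OF xs(2)] by measurable
  show "integrable (Pm M i) (\<lambda>Dm. cond_dens M i Di Dm *
      (B / real (nprov M) * ((ln (PMI M rep (data_minus M i Dm)) - L) / (R - L))))"
  proof (rule Bochner_Integration.integrable_bound[OF _ m])
    show "integrable (Pm M i) (\<lambda>Dm. cond_dens M i Di Dm * (B / real (nprov M)))"
      using cond_int1(1)[OF xs(1)] by simp
    show "AE Dm in Pm M i. norm (cond_dens M i Di Dm *
      (B / real (nprov M) * ((ln (PMI M rep (data_minus M i Dm)) - L) / (R - L))))
       \<le> norm (cond_dens M i Di Dm * (B / real (nprov M)))"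
    proof (rule AE_I2)
      fix Dm assume d: "Dm \<in> space (Pm M i)"
      have c0: "cond_dens M i Di Dm \<ge> 0" unfolding cond_PMI[OF xs(1) d]
        using PMI_pos[OF xs(1) d] marg_nn[OF d] by simp
      have l: "L \<le> ln (PMI M rep (data_minus M i Dm))" "ln (PMI M rep (data_minus M i Dm)) \<le> R"
        using pay_eq(2,3)[OF mo i rep f d] by auto
      define q where "q = (ln (PMI M rep (data_minus M i Dm)) - L) / (R - L)"
      have q: "0 \<le> q" "q \<le> 1" unfolding q_def using l BLR by (auto simp: divide_simps)
      have b: "B / real (nprov M) \<ge> 0" using BLR by simp
      have "\<bar>cond_dens M i Di Dm * (B / real (nprov M) * q)\<bar> \<le> \<bar>cond_dens M i Di Dm * (B / real (nprov M))\<bar>"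
      proof -
        have "B / real (nprov M) * q \<le> B / real (nprov M)" using b q by (rule mult_right_le_one_le)
        then have "cond_dens M i Di Dm * (B / real (nprov M) * q) \<le> cond_dens M i Di Dm * (B / real (nprov M))"
          using c0 by (rule mult_left_mono)
        moreover have "0 \<le> cond_dens M i Di Dm * (B / real (nprov M) * q)"
          using c0 b q by (intro mult_nonneg_nonneg)
        ultimately show ?thesis by (metis abs_of_nonneg order_trans)
      qed
      then show "norm (cond_dens M i Di Dm *
      (B / real (nprov M) * ((ln (PMI M rep (data_minus M i Dm)) - L) / (R - L))))
       \<le> norm (cond_dens M i Di Dm * (B / real (nprov M)))" unfolding q_def by simp
    qed
  qed
qed


lemma aux_div: fixes a b k c d :: real assumes "a - b = k * d" "k \<noteq> 0"
  shows "(c * a - c * b) / k = c * d"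
proof -
  have "c * a - c * b = c * (a - b)" by (simp add: right_diff_distrib)
  then show ?thesis using assms by simp
qed

lemma alg_gap: fixes w P1 P2 l1 l2 B n L R :: real
  assumes "B > 0" "n > 0" "L < R"
  shows "w * (P1 * (l1 - l2) - (P1 - P2)) =
    (P1 * w * (B / n * ((l1 - L) / (R - L))) - P1 * w * (B / n * ((l2 - L) / (R - L)))) / (B / n / (R - L))
    - P1 * w + P2 * w"
proof -
  have s: "B / n * ((l - L) / (R - L)) = (B / n / (R - L)) * (l - L)" for l by simp
  have "B / n * ((l1 - L) / (R - L)) - B / n * ((l2 - L) / (R - L)) = (B / n / (R - L)) * (l1 - l2)"
  proof -
    have "\<And>k. k * (l1 - L) - k * (l2 - L) = k * (l1 - l2)" by (simp add: algebra_simps)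
    then show ?thesis unfolding s .
  qed
  moreover have "B / n / (R - L) \<noteq> 0" using assms by simp
  ultimately have "(P1 * w * (B / n * ((l1 - L) / (R - L))) - P1 * w * (B / n * ((l2 - L) / (R - L)))) / (B / n / (R - L))
     = P1 * w * (l1 - l2)"
    by (rule aux_div)
  then show ?thesis by (simp add: algebra_simps)
qed

lemma gap: assumes mo: "mech_ok M B L R" and i: "i < nprov M" and Di: "Di \<in> datasets M i"
  and D': "D' \<in> datasets M i" and f: "validf i f"
  defines "Dl \<equiv> (\<lambda>Dm. marg_dens M i Dm * (PMI M Di (data_minus M i Dm) *
      (ln (PMI M Di (data_minus M i Dm)) - ln (PMI M D' (data_minus M i Dm)))
      - (PMI M Di (data_minus M i Dm) - PMI M D' (data_minus M i Dm))))"
  shows "integrable (Pm M i) Dl"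
    "exp_pay M B L R i Di f Di - exp_pay M B L R i Di f D' = B / real (nprov M) / (R - L) * integral\<^sup>L (Pm M i) Dl"
proof -
  define k where "k = B / real (nprov M) / (R - L)"
  have BLR: "B > 0" "L < R" using mo unfolding mech_ok_def by auto
  have k: "k > 0" unfolding k_def using BLR i by simp
  define Pay where "Pay = (\<lambda>rep Dm. B / real (nprov M) * ((ln (PMI M rep (data_minus M i Dm)) - L) / (R - L)))"
  have xs: "Di \<in> lists SX" "D' \<in> lists SX" using Di D' ds_lists by auto
  have E1: "exp_pay M B L R i Di f Di = (\<integral>Dm. cond_dens M i Di Dm * Pay Di Dm \<partial>Pm M i)"
      "integrable (Pm M i) (\<lambda>Dm. cond_dens M i Di Dm * Pay Di Dm)"
    using Epay[OF mo i Di Di f] unfolding Pay_def by auto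
  have E2: "exp_pay M B L R i Di f D' = (\<integral>Dm. cond_dens M i Di Dm * Pay D' Dm \<partial>Pm M i)"
      "integrable (Pm M i) (\<lambda>Dm. cond_dens M i Di Dm * Pay D' Dm)"
    using Epay[OF mo i Di D' f] unfolding Pay_def by auto
  have eq: "Dl Dm = (cond_dens M i Di Dm * Pay Di Dm - cond_dens M i Di Dm * Pay D' Dm) / k
      - cond_dens M i Di Dm + cond_dens M i D' Dm" if d: "Dm \<in> space (Pm M i)" for Dm
    unfolding Dl_def Pay_def k_def cond_PMI[OF xs(1) d] cond_PMI[OF xs(2) d]
    using BLR i by (intro alg_gap) auto
  have int: "integrable (Pm M i) (\<lambda>Dm. (cond_dens M i Di Dm * Pay Di Dm - cond_dens M i Di Dm * Pay D' Dm) / k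
      - cond_dens M i Di Dm + cond_dens M i D' Dm)"
    by (rule Bochner_Integration.integrable_add[OF Bochner_Integration.integrable_diff[OF
      Bochner_Integration.integrable_divide[OF Bochner_Integration.integrable_diff[OF E1(2) E2(2)]]
      cond_int1(1)[OF xs(1)]] cond_int1(1)[OF xs(2)]])
  show "integrable (Pm M i) Dl"
    using int eq by (subst Bochner_Integration.integrable_cong[OF refl]) auto
  have "integral\<^sup>L (Pm M i) Dl = integral\<^sup>L (Pm M i) (\<lambda>Dm. (cond_dens M i Di Dm * Pay Di Dm - cond_dens M i Di Dm * Pay D' Dm) / k
      - cond_dens M i Di Dm + cond_dens M i D' Dm)"
    using eq by (intro Bochner_Integration.integral_cong) auto
  also have "\<dots> = (exp_pay M B L R i Di f Di - exp_pay M B L R i Di f D') / k - 1 + 1"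
    using E1 E2 cond_int1[OF xs(1)] cond_int1[OF xs(2)] by (simp add: integral_diff integral_add)
  finally show "exp_pay M B L R i Di f Di - exp_pay M B L R i Di f D' = B / real (nprov M) / (R - L) * integral\<^sup>L (Pm M i) Dl"
    unfolding k_def[symmetric] using k by simp
qed


lemma Dl_nn: assumes "xs \<in> lists SX" "zs \<in> lists SX" "Dm \<in> space (Pm M i)"
  shows "0 \<le> marg_dens M i Dm * (PMI M xs (data_minus M i Dm) *
      (ln (PMI M xs (data_minus M i Dm)) - ln (PMI M zs (data_minus M i Dm)))
      - (PMI M xs (data_minus M i Dm) - PMI M zs (data_minus M i Dm)))"
  using gibbs(1)[OF PMI_pos[OF assms(1,3)] PMI_pos[OF assms(2,3)]] marg_nn[OF assms(3)]
  by simp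

lemma Dl_pos: assumes "xs \<in> lists SX" "zs \<in> lists SX" "Dm \<in> space (Pm M i)"
  and "marg_dens M i Dm > 0" "PMI M xs (data_minus M i Dm) \<noteq> PMI M zs (data_minus M i Dm)"
  shows "0 < marg_dens M i Dm * (PMI M xs (data_minus M i Dm) *
      (ln (PMI M xs (data_minus M i Dm)) - ln (PMI M zs (data_minus M i Dm)))
      - (PMI M xs (data_minus M i Dm) - PMI M zs (data_minus M i Dm)))"
  using gibbs(2)[OF PMI_pos[OF assms(1,3)] PMI_pos[OF assms(2,3)] assms(5)] assms(4)
  by simp

lemma hfun_PMI: assumes "xs \<in> lists SX" "zs \<in> lists SX" "Dm \<in> space (Pm M i)"
  shows "hfun M (data_minus M i Dm) (params M xs) = hfun M (data_minus M i Dm) (params M zs)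
     \<longleftrightarrow> PMI M xs (data_minus M i Dm) = PMI M zs (data_minus M i Dm)"
proof -
  have "gg M (data_minus M i Dm) > 0" "gg M [] > 0"
    using gg_pos[OF dm_lists[OF assms(3)]] gg_pos[of "[]"] by auto
  then show ?thesis unfolding PMI_hfun[OF assms(1) dm_lists[OF assms(3)]] PMI_hfun[OF assms(2) dm_lists[OF assms(3)]]
    by simp
qed

lemma neq_sets: "f \<in> borel_measurable N \<Longrightarrow> g \<in> borel_measurable N \<Longrightarrow> {x \<in> space N. f x \<noteq> (g x::real)} \<in> sets N"
proof -
  assume f: "f \<in> borel_measurable N" and g: "g \<in> borel_measurable N"
  have "(\<lambda>x. f x - g x) \<in> borel_measurable N" using f g by (rule borel_measurable_diff)
  moreover have "(- {0::real}) \<in> sets borel" by (intro borel_open) auto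
  ultimately have "(\<lambda>x. f x - g x) -` (- {0}) \<inter> space N \<in> sets N" by (rule measurable_sets)
  moreover have "(\<lambda>x. f x - g x) -` (- {0}) \<inter> space N = {x \<in> space N. f x \<noteq> g x}" by auto
  ultimately show ?thesis by simp
qed

lemma A_sets: assumes "xs \<in> lists SX" "zs \<in> lists SX"
  shows "{Dm \<in> space (Pm M i). hfun M (data_minus M i Dm) (params M xs) \<noteq> hfun M (data_minus M i Dm) (params M zs)}
    \<in> sets (Pm M i)"
  using neq_sets[OF hfun_meas[OF assms(1)] hfun_meas[OF assms(2)]] .

lemma marg_nn_int: "(\<integral>\<^sup>+x. ennreal (marg_dens M i x) \<partial>Pm M i) = 1"
proof -
  have "(\<integral>\<^sup>+x. ennreal (marg_dens M i x) \<partial>Pm M i) = ennreal (integral\<^sup>L (Pm M i) (marg_dens M i))"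
    using cond_int1(1)[of "[]" i] marg_nn unfolding marg_cond[symmetric]
    by (intro nn_integral_eq_integral) (auto intro!: AE_I2)
  then show ?thesis using cond_int1(2)[of "[]" i] unfolding marg_cond by simp
qed

lemma dens_A: assumes "A \<in> sets (Pm M i)"
  shows "emeasure (density (Pm M i) (\<lambda>Dm. ennreal (marg_dens M i Dm))) A
     = (\<integral>\<^sup>+x. ennreal (marg_dens M i x) * indicator A x \<partial>Pm M i)"
    "measure (density (Pm M i) (\<lambda>Dm. ennreal (marg_dens M i Dm))) A = 0 \<longleftrightarrow>
     (\<integral>\<^sup>+x. ennreal (marg_dens M i x) * indicator A x \<partial>Pm M i) = 0"
proof -
  show e: "emeasure (density (Pm M i) (\<lambda>Dm. ennreal (marg_dens M i Dm))) A
     = (\<integral>\<^sup>+x. ennreal (marg_dens M i x) * indicator A x \<partial>Pm M i)"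
    using marg_meas assms by (subst emeasure_density) auto
  have "(\<integral>\<^sup>+x. ennreal (marg_dens M i x) * indicator A x \<partial>Pm M i) \<le> (\<integral>\<^sup>+x. ennreal (marg_dens M i x) \<partial>Pm M i)"
    by (intro nn_integral_mono) (auto split: split_indicator)
  then have "emeasure (density (Pm M i) (\<lambda>Dm. ennreal (marg_dens M i Dm))) A \<noteq> \<top>"
    unfolding e marg_nn_int by (auto simp: top_unique)
  then show "measure (density (Pm M i) (\<lambda>Dm. ennreal (marg_dens M i Dm))) A = 0 \<longleftrightarrow>
     (\<integral>\<^sup>+x. ennreal (marg_dens M i x) * indicator A x \<partial>Pm M i) = 0"
    unfolding e[symmetric] by (simp add: emeasure_eq_ennreal_measure)
qed


lemma main: assumes mo: "mech_ok M B L R"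
  shows "sensitive M B L R \<longleftrightarrow>
    (\<forall>i<nprov M. \<forall>Di\<in>datasets M i. \<forall>D'\<in>datasets M i.
       params M D' \<noteq> params M Di \<longrightarrow>
       measure (density (Pm M i) (\<lambda>Dm. ennreal (marg_dens M i Dm)))
         {Dm\<in>space (Pm M i). hfun M (data_minus M i Dm) (params M D')
                             \<noteq> hfun M (data_minus M i Dm) (params M Di)} > 0)"
    (is "_ \<longleftrightarrow> ?R")
proof -
  have BLR: "B > 0" "L < R" using mo unfolding mech_ok_def by auto
  have kpos: "B / real (nprov M) / (R - L) > 0" if "i < nprov M" for i using BLR that by simp
  show ?thesis
  proof
    assume S: "sensitive M B L R"
    show ?R
    proof (intro allI impI ballI)
      fix i Di D' assume i: "i < nprov M" and Di: "Di \<in> datasets M i" and D': "D' \<in> datasets M i"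
        and ne: "params M D' \<noteq> params M Di"
      have xs: "Di \<in> lists SX" "D' \<in> lists SX" using Di D' ds_lists by auto
      define A where "A = {Dm\<in>space (Pm M i). hfun M (data_minus M i Dm) (params M D')
                             \<noteq> hfun M (data_minus M i Dm) (params M Di)}"
      have As: "A \<in> sets (Pm M i)" unfolding A_def by (rule A_sets[OF xs(2,1)])
      define f :: "nat \<Rightarrow> 'x list \<Rightarrow> 'x list" where "f = (\<lambda>j D. D)"
      have f: "validf i f" unfolding validf_def f_def by auto
      have lt: "exp_pay M B L R i Di f D' < exp_pay M B L R i Di f Di"
        using S i Di D' ne f unfolding sensitive_def validf_def by blast
      show "measure (density (Pm M i) (\<lambda>Dm. ennreal (marg_dens M i Dm))) A > 0"
      proof (rule ccontr)
        assume "\<not> ?thesis"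
        then have "measure (density (Pm M i) (\<lambda>Dm. ennreal (marg_dens M i Dm))) A = 0"
          using measure_nonneg[of "density (Pm M i) (\<lambda>Dm. ennreal (marg_dens M i Dm))" A] by linarith
        then have "(\<integral>\<^sup>+x. ennreal (marg_dens M i x) * indicator A x \<partial>Pm M i) = 0"
          using dens_A(2)[OF As] by simp
        then have ae: "AE x in Pm M i. ennreal (marg_dens M i x) * indicator A x = 0"
          using As marg_meas by (subst nn_integral_0_iff_AE[symmetric]) auto
        have "AE x in Pm M i. marg_dens M i x * (PMI M Di (data_minus M i x) *
            (ln (PMI M Di (data_minus M i x)) - ln (PMI M D' (data_minus M i x)))
            - (PMI M Di (data_minus M i x) - PMI M D' (data_minus M i x))) = 0"
          using ae
        proof (rule AE_mp[OF _ AE_I2[OF impI]])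
          fix x assume x: "x \<in> space (Pm M i)" and h: "ennreal (marg_dens M i x) * indicator A x = 0"
          show "marg_dens M i x * (PMI M Di (data_minus M i x) *
            (ln (PMI M Di (data_minus M i x)) - ln (PMI M D' (data_minus M i x)))
            - (PMI M Di (data_minus M i x) - PMI M D' (data_minus M i x))) = 0"
          proof (cases "x \<in> A")
            case True
            then have "marg_dens M i x = 0" using h marg_nn[OF x] by auto
            then show ?thesis by simp
          next
            case False
            then have "PMI M D' (data_minus M i x) = PMI M Di (data_minus M i x)"
              using hfun_PMI[OF xs(2,1) x] x unfolding A_def by auto
            then show ?thesis by simp
          qed
        qed
        then have "integral\<^sup>L (Pm M i) (\<lambda>x. marg_dens M i x * (PMI M Di (data_minus M i x) *
            (ln (PMI M Di (data_minus M i x)) - ln (PMI M D' (data_minus M i x)))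
            - (PMI M Di (data_minus M i x) - PMI M D' (data_minus M i x)))) = 0"
          by (rule integral_eq_zero_AE)
        then show False using gap(2)[OF mo i Di D' f] lt by simp
      qed
    qed
  next
    assume R: ?R
    show "sensitive M B L R" unfolding sensitive_def
    proof (intro allI impI ballI conjI)
      fix i Di f assume i: "i < nprov M" and Di: "Di \<in> datasets M i"
        and f0: "\<forall>j<nprov M. j \<noteq> i \<longrightarrow> (\<forall>D\<in>datasets M j. f j D \<in> datasets M j \<and> params M (f j D) = params M D)"
      have f: "validf i f" using f0 unfolding validf_def .
      fix D' assume D': "D' \<in> datasets M i"
      have xs: "Di \<in> lists SX" "D' \<in> lists SX" using Di D' ds_lists by auto
      have ge: "0 \<le> integral\<^sup>L (Pm M i) (\<lambda>x. marg_dens M i x * (PMI M Di (data_minus M i x) *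
            (ln (PMI M Di (data_minus M i x)) - ln (PMI M D' (data_minus M i x)))
            - (PMI M Di (data_minus M i x) - PMI M D' (data_minus M i x))))"
        by (intro integral_nonneg_AE AE_I2 Dl_nn[OF xs])
      show "exp_pay M B L R i Di f D' \<le> exp_pay M B L R i Di f Di"
      proof -
        have "0 \<le> B / real (nprov M) / (R - L) * integral\<^sup>L (Pm M i) (\<lambda>x. marg_dens M i x * (PMI M Di (data_minus M i x) *
            (ln (PMI M Di (data_minus M i x)) - ln (PMI M D' (data_minus M i x)))
            - (PMI M Di (data_minus M i x) - PMI M D' (data_minus M i x))))"
          using ge kpos[OF i] by (intro mult_nonneg_nonneg) auto
        then show ?thesis using gap(2)[OF mo i Di D' f] by linarith
      qed
    next
      fix i Di f assume i: "i < nprov M" and Di: "Di \<in> datasets M i"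
        and f0: "\<forall>j<nprov M. j \<noteq> i \<longrightarrow> (\<forall>D\<in>datasets M j. f j D \<in> datasets M j \<and> params M (f j D) = params M D)"
      have f: "validf i f" using f0 unfolding validf_def .
      fix D' Dt assume D': "D' \<in> datasets M i" and Dt: "Dt \<in> datasets M i"
        and pp: "params M D' \<noteq> params M Di \<and> params M Dt = params M Di"
      have xs: "Di \<in> lists SX" "D' \<in> lists SX" using Di D' ds_lists by auto
      have EDt: "exp_pay M B L R i Di f Dt = exp_pay M B L R i Di f Di"
        unfolding Epay(1)[OF mo i Di Dt f] Epay(1)[OF mo i Di Di f] params_PMI[OF conjunct2[OF pp]] ..
      define A where "A = {Dm\<in>space (Pm M i). hfun M (data_minus M i Dm) (params M D')
                             \<noteq> hfun M (data_minus M i Dm) (params M Di)}"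
      have As: "A \<in> sets (Pm M i)" unfolding A_def by (rule A_sets[OF xs(2,1)])
      have mA: "measure (density (Pm M i) (\<lambda>Dm. ennreal (marg_dens M i Dm))) A > 0"
        using R i Di D' pp unfolding A_def by blast
      define Dl where "Dl = (\<lambda>x. marg_dens M i x * (PMI M Di (data_minus M i x) *
            (ln (PMI M Di (data_minus M i x)) - ln (PMI M D' (data_minus M i x)))
            - (PMI M Di (data_minus M i x) - PMI M D' (data_minus M i x))))"
      have ge: "0 \<le> integral\<^sup>L (Pm M i) Dl"
        unfolding Dl_def by (intro integral_nonneg_AE AE_I2 Dl_nn[OF xs])
      have gt: "0 < integral\<^sup>L (Pm M i) Dl"
      proof (rule ccontr)
        assume "\<not> ?thesis"
        then have "integral\<^sup>L (Pm M i) Dl = 0" using ge by simp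
        then have ae: "AE x in Pm M i. Dl x = 0"
          using integral_nonneg_eq_0_iff_AE[of "Pm M i" Dl] gap(1)[OF mo i Di D' f] Dl_nn[OF xs]
          unfolding Dl_def by (auto intro!: AE_I2)
        have "AE x in Pm M i. ennreal (marg_dens M i x) * indicator A x = 0"
          using ae
        proof (rule AE_mp[OF _ AE_I2[OF impI]])
          fix x assume x: "x \<in> space (Pm M i)" and h: "Dl x = 0"
          show "ennreal (marg_dens M i x) * indicator A x = 0"
          proof (cases "x \<in> A")
            case True
            then have ne: "PMI M Di (data_minus M i x) \<noteq> PMI M D' (data_minus M i x)"
              using hfun_PMI[OF xs(2,1) x] x unfolding A_def by auto
            have "\<not> marg_dens M i x > 0"
              using Dl_pos[OF xs x _ ne] h unfolding Dl_def by auto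
            then have "ennreal (marg_dens M i x) = 0" by (simp add: ennreal_eq_0_iff)
            then show ?thesis by simp
          next
            case False then show ?thesis by simp
          qed
        qed
        then have "(\<integral>\<^sup>+x. ennreal (marg_dens M i x) * indicator A x \<partial>Pm M i) = 0"
          using As marg_meas by (subst nn_integral_0_iff_AE) auto
        then have "measure (density (Pm M i) (\<lambda>Dm. ennreal (marg_dens M i Dm))) A = 0"
          using dens_A(2)[OF As] by simp
        then show False using mA by simp
      qed
      show "exp_pay M B L R i Di f D' < exp_pay M B L R i Di f Dt"
      proof -
        have "0 < B / real (nprov M) / (R - L) * integral\<^sup>L (Pm M i) Dl"
          using gt kpos[OF i] by (intro mult_pos_pos) auto
        then show ?thesis unfolding EDt using gap(2)[OF mo i Di D' f, folded Dl_def] by linarith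
      qed
    qed
  qed
qed

end

theorem theorem3:
  fixes M :: "('x, 'm::finite) emodel" and B L R :: real
  assumes "valid_model M"
    and "mech_ok M B L R"
  shows "sensitive M B L R \<longleftrightarrow>
    (\<forall>i<nprov M. \<forall>Di\<in>datasets M i. \<forall>D'\<in>datasets M i.
       params M D' \<noteq> params M Di \<longrightarrow>
       measure (density (Pm M i) (\<lambda>Dm. ennreal (marg_dens M i Dm)))
         {Dm\<in>space (Pm M i). hfun M (data_minus M i Dm) (params M D')
                             \<noteq> hfun M (data_minus M i Dm) (params M Di)} > 0)"
  by (rule main[OF assms])

end
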